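(* Let $\Sigma$ be a non-empty finite or countably infinite alphabet and let $\mu$ be a probability map induced by a Bernoulli distribution $p$ on $\Sigma$ that is not positive (i.e. $p(b)=0$ for some $b\in\Sigma$). Then there exist a finite word $w\in\Sigma^*$ and a $\mu$-distributed $\alpha\in\Sigma^\omega$ such that the Postnikova strategy $\mathcal S_w=\{vw: v\in\Sigma^*\}$ selects from $\alpha$ an infinite sequence that is not $\mu$-distributed.
   Context: A probability map over $\Sigma$ is $\mu:\Sigma^+\to[0,1]$ with $\sum_{w\in\Sigma^n}\mu(w)=1$ for each $n\ge1$. $\mu$ is induced by a Bernoulli distribution $p:\Sigma\to[0,1]$ with $\sum_a p(a)=1$ if $\mu(a_1\cdots a_n)=\prod_i p(a_i)$; $p$ is positive if $p(a)>0$ for every $a$. $\alpha\in\Sigma^\omega$ is $\mu$-distributed if for every $w\in\Sigma^+$ the number of occurrences of $w$ as a contiguous block in the length-$N$ prefix of $\alpha$, divided by $N$, tends to $\mu(w)$. For $S\subseteq\Sigma^*$, $S[\alpha]$ is the subsequence of those $\alpha_i$ with $\alpha_1\cdots\alpha_{i-1}\in S$. *)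

theory Defs
  imports "HOL-Analysis.Analysis" "HOL-Library.Countable"
begin

text \<open>Words over the alphabet 'a are lists; infinite sequences are functions nat => 'a
  (0-indexed: alpha 0 is the first letter).\<close>

definition bernoulli_dist :: "('a \<Rightarrow> real) \<Rightarrow> bool" where
  "bernoulli_dist p \<longleftrightarrow> (\<forall>a. p a \<ge> 0) \<and> (p has_sum 1) UNIV"

definition bernoulli_map :: "('a \<Rightarrow> real) \<Rightarrow> 'a list \<Rightarrow> real" where
  "bernoulli_map p w = prod_list (map p w)"

definition occ :: "'a list \<Rightarrow> (nat \<Rightarrow> 'a) \<Rightarrow> nat \<Rightarrow> nat" where
  "occ w alpha N = card {i. i + length w \<le> N \<and> map alpha [i..<i + length w] = w}"

definition mu_distributed :: "('a list \<Rightarrow> real) \<Rightarrow> (nat \<Rightarrow> 'a) \<Rightarrow> bool" where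
  "mu_distributed mu alpha \<longleftrightarrow>
     (\<forall>w. w \<noteq> [] \<longrightarrow> (\<lambda>N. real (occ w alpha N) / real N) \<longlonglongrightarrow> mu w)"

text \<open>Positions selected by S: alpha i (0-indexed) is selected iff the prefix
  alpha 0 ... alpha (i-1) belongs to S.\<close>
definition sel_positions :: "'a list set \<Rightarrow> (nat \<Rightarrow> 'a) \<Rightarrow> nat set" where
  "sel_positions S alpha = {i. map alpha [0..<i] \<in> S}"

text \<open>The selected subsequence S[alpha] (meaningful when infinitely many positions are selected).\<close>
definition select :: "'a list set \<Rightarrow> (nat \<Rightarrow> 'a) \<Rightarrow> (nat \<Rightarrow> 'a)" where
  "select S alpha = alpha \<circ> enumerate (sel_positions S alpha)"

definition postnikova :: "'a list \<Rightarrow> 'a list set" where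
  "postnikova w = {v @ w | v. True}"

end

theory Submission
  imports Defs "HOL-Probability.Probability" "HOL-Real_Asymp.Real_Asymp"
begin


lemma div_ratio_lim:
  fixes k r :: nat assumes k: "k > 0"
  shows "(\<lambda>N. real ((N - r) div k) / real N) \<longlonglongrightarrow> 1 / real k"
proof (rule tendsto_sandwich)
  have lo: "real N - real r - real k \<le> real k * real ((N - r) div k)" for N
  proof -
    have "N - r < k * ((N - r) div k) + k"
      using k by (metis add.commute div_mult_mod_eq mod_less_divisor nat_add_left_cancel_less mult.commute)
    hence "real (N - r) < real k * real ((N - r) div k) + real k"
      by (metis of_nat_add of_nat_less_iff of_nat_mult)
    moreover have "real N - real r \<le> real (N - r)" by simp
    ultimately show ?thesis by linarith
  qed
  have hi: "real k * real ((N - r) div k) \<le> real N" for N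
  proof -
    have "k * ((N - r) div k) \<le> N" by (metis diff_le_self dual_order.trans times_div_less_eq_dividend)
    thus ?thesis by (metis of_nat_le_iff of_nat_mult)
  qed
  show "\<forall>\<^sub>F N in sequentially. (real N - real r - real k) / (real k * real N) \<le> real ((N - r) div k) / real N"
    using eventually_gt_at_top[of "0::nat"]
  proof eventually_elim
    case (elim N)
    have "(real N - real r - real k) / real k \<le> real ((N - r) div k)"
      using lo[of N] k by (simp add: field_simps)
    hence "((real N - real r - real k) / real k) / real N \<le> real ((N - r) div k) / real N"
      by (rule divide_right_mono) simp
    then show ?case by (simp add: field_simps)
  qed
  show "\<forall>\<^sub>F N in sequentially. real ((N - r) div k) / real N \<le> real N / (real k * real N)"
    using eventually_gt_at_top[of "0::nat"]
  proof eventually_elim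
    case (elim N)
    then show ?case using hi[of N] k by (simp add: field_simps)
  qed
  show "(\<lambda>N. (real N - real r - real k) / (real k * real N)) \<longlonglongrightarrow> 1 / real k"
  proof -
    have "(\<lambda>N. (1 - (real r + real k) / real N) / real k) \<longlonglongrightarrow> (1 - 0) / real k"
      by (intro tendsto_intros tendsto_divide_0[OF tendsto_const] filterlim_real_sequentially) (use k in auto)
    moreover have "eventually (\<lambda>N. (1 - (real r + real k) / real N) / real k = (real N - real r - real k) / (real k * real N)) sequentially"
      using eventually_gt_at_top[of "0::nat"] by eventually_elim (use k in \<open>simp add: field_simps\<close>)
    ultimately show ?thesis by (simp add: tendsto_cong)
  qed
  show "(\<lambda>N. real N / (real k * real N)) \<longlonglongrightarrow> 1 / real k"
  proof -
    have "eventually (\<lambda>N. 1 / real k = real N / (real k * real N)) sequentially"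
      using eventually_gt_at_top[of "0::nat"] by eventually_elim (use k in \<open>simp add: field_simps\<close>)
    thus ?thesis by (rule Lim_transform_eventually[OF tendsto_const])
  qed
qed

lemma div_filterlim:
  fixes k r :: nat assumes k: "k > 0"
  shows "filterlim (\<lambda>N. (N - r) div k) at_top sequentially"
  unfolding filterlim_at_top
proof
  fix Z :: nat
  show "eventually (\<lambda>N. Z \<le> (N - r) div k) sequentially"
    using eventually_ge_at_top[of "Z * k + r"]
  proof eventually_elim
    case (elim N)
    hence "Z * k \<le> N - r" by simp
    thus ?case using k by (metis div_le_mono nonzero_mult_div_cancel_right not_gr_zero)
  qed
qed

lemma occ_limit_abstract:
  fixes f :: "nat \<Rightarrow> nat" and C :: "nat \<Rightarrow> nat \<Rightarrow> nat"
  assumes k: "k > 0"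
    and f: "\<And>N. f N = (\<Sum>r<k. C r ((N - r) div k))"
    and C0: "\<And>r. C r 0 = 0"
    and lim: "\<And>r. r < k \<Longrightarrow> (\<lambda>m. real (C r m) / real m) \<longlonglongrightarrow> \<mu>"
  shows "(\<lambda>N. real (f N) / real N) \<longlonglongrightarrow> \<mu>"
proof -
  have eq: "real (f N) / real N = (\<Sum>r<k. (real (C r ((N - r) div k)) / real ((N - r) div k)) * (real ((N - r) div k) / real N))" for N
  proof -
    have "real (C r ((N - r) div k)) / real N = (real (C r ((N - r) div k)) / real ((N - r) div k)) * (real ((N - r) div k) / real N)" for r
      by (cases "(N - r) div k = 0") (simp_all add: C0)
    note * = this
    have "real (f N) / real N = (\<Sum>r<k. real (C r ((N - r) div k)) / real N)"
      by (simp add: f sum_divide_distrib)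
    also have "\<dots> = (\<Sum>r<k. (real (C r ((N - r) div k)) / real ((N - r) div k)) * (real ((N - r) div k) / real N))"
      by (rule sum.cong[OF refl]) (rule *)
    finally show ?thesis .
  qed
  have "(\<lambda>N. \<Sum>r<k. (real (C r ((N - r) div k)) / real ((N - r) div k)) * (real ((N - r) div k) / real N)) \<longlonglongrightarrow> (\<Sum>r<k. \<mu> * (1 / real k))"
  proof (intro tendsto_sum tendsto_mult)
    fix r assume "r \<in> {..<k}"
    thus "(\<lambda>N. real (C r ((N - r) div k)) / real ((N - r) div k)) \<longlonglongrightarrow> \<mu>"
      using filterlim_compose[OF lim div_filterlim[OF k]] by (simp add: o_def)
    show "(\<lambda>N. real ((N - r) div k) / real N) \<longlonglongrightarrow> 1 / real k" by (rule div_ratio_lim[OF k])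
  qed
  moreover have "(\<Sum>r<k. \<mu> * (1 / real k)) = \<mu>" using k by simp
  ultimately show ?thesis by (simp add: eq)
qed

lemma occ_decomp:
  assumes k: "length w = k" "k > 0"
  shows "occ w x N = (\<Sum>r<k. card {j. j < (N - r) div k \<and> map x [j*k+r..<j*k+r+k] = w})"
proof -
  let ?A = "{i. i + k \<le> N \<and> map x [i..<i + k] = w}"
  have finA: "finite ?A" by (rule finite_subset[of _ "{..N}"]) auto
  have img: "(\<lambda>i. i mod k) ` ?A \<subseteq> {..<k}" using k by auto
  have "card ?A = (\<Sum>r<k. card {i\<in>?A. i mod k = r})"
    using sum.group[OF finA finite_lessThan[of k] img, of "\<lambda>_. 1::nat"] by simp
  also have "\<dots> = (\<Sum>r<k. card {j. j < (N - r) div k \<and> map x [j*k+r..<j*k+r+k] = w})"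
  proof (rule sum.cong[OF refl])
    fix r assume r: "r \<in> {..<k}"
    have "{i\<in>?A. i mod k = r} = (\<lambda>j. j*k+r) ` {j. j < (N - r) div k \<and> map x [j*k+r..<j*k+r+k] = w}"
    proof (intro equalityI subsetI)
      fix i assume i: "i \<in> {i\<in>?A. i mod k = r}"
      define j where "j = i div k"
      have ij: "i = j*k + r" using i unfolding j_def by (metis (mono_tags, lifting) mem_Collect_eq div_mult_mod_eq)
      have "Suc j * k \<le> N - r" using i ij by auto
      hence "Suc j \<le> (N - r) div k" using k by (simp add: less_eq_div_iff_mult_less_eq)
      thus "i \<in> (\<lambda>j. j*k+r) ` {j. j < (N - r) div k \<and> map x [j*k+r..<j*k+r+k] = w}"
        using i ij by (auto intro!: image_eqI[of _ _ j])
    next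
      fix i assume "i \<in> (\<lambda>j. j*k+r) ` {j. j < (N - r) div k \<and> map x [j*k+r..<j*k+r+k] = w}"
      then obtain j where j: "i = j*k+r" "j < (N - r) div k" "map x [j*k+r..<j*k+r+k] = w" by auto
      have "Suc j \<le> (N - r) div k" using j(2) by simp
      hence "Suc j * k \<le> N - r" using k by (simp only: less_eq_div_iff_mult_less_eq)
      moreover have "r < k" using r by simp
      ultimately show "i \<in> {i\<in>?A. i mod k = r}" using j k by auto
    qed
    moreover have "inj (\<lambda>j. j*k+r)" using k by (auto simp: inj_on_def)
    ultimately show "card {i\<in>?A. i mod k = r} = card {j. j < (N - r) div k \<and> map x [j*k+r..<j*k+r+k] = w}"
      by (simp add: card_image inj_on_subset[of _ UNIV])
  qed
  finally show ?thesis unfolding occ_def using k by simp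
qed



definition blk :: "'a list \<Rightarrow> nat \<Rightarrow> (nat \<Rightarrow> 'a) \<Rightarrow> bool" where
  "blk w s x \<longleftrightarrow> map x [s..<s + length w] = w"

lemma blk_iff: "blk w s x \<longleftrightarrow> (\<forall>i\<in>{s..<s+length w}. x i = w ! (i - s))"
proof -
  have "blk w s x \<longleftrightarrow> length (map x [s..<s+length w]) = length w \<and>
      (\<forall>t<length (map x [s..<s+length w]). map x [s..<s+length w] ! t = w ! t)"
    unfolding blk_def by (rule list_eq_iff_nth_eq)
  also have "\<dots> \<longleftrightarrow> (\<forall>t<length w. x (s+t) = w ! t)"
  proof -
    have "\<And>t. t < length w \<Longrightarrow> map x [s..<s+length w] ! t = x (s+t)" by simp
    thus ?thesis by simp
  qed
  also have "\<dots> \<longleftrightarrow> (\<forall>i\<in>{s..<s+length w}. x i = w ! (i - s))"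
  proof safe
    fix i assume "\<forall>t<length w. x (s+t) = w ! t" "i \<in> {s..<s+length w}"
    thus "x i = w ! (i - s)" by (metis atLeastLessThan_iff le_add_diff_inverse less_diff_conv2 add.commute)
  qed auto
  finally show ?thesis .
qed

definition Pm :: "('a \<Rightarrow> real) \<Rightarrow> 'a pmf" where "Pm p = embed_pmf p"
definition Mp :: "('a \<Rightarrow> real) \<Rightarrow> (nat \<Rightarrow> 'a) measure" where
  "Mp p = PiM (UNIV::nat set) (\<lambda>_. measure_pmf (Pm p))"

lemma nn_integral_p:
  fixes p :: "'a::countable \<Rightarrow> real"
  assumes "bernoulli_dist p"
  shows "(\<integral>\<^sup>+x. ennreal (p x) \<partial>count_space UNIV) = 1"
proof -
  have nn: "\<And>x. p x \<ge> 0" and hs: "(p has_sum 1) UNIV" using assms unfolding bernoulli_dist_def by auto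
  have sm: "p summable_on UNIV" using hs by (rule has_sum_imp_summable)
  hence "(\<lambda>x. norm (p x)) summable_on UNIV" using nn by simp
  hence abs: "Infinite_Set_Sum.abs_summable_on p UNIV" using abs_summable_equivalent by blast
  have "(\<integral>\<^sup>+x. ennreal (p x) \<partial>count_space UNIV) = ennreal (infsetsum p UNIV)"
    by (rule nn_integral_conv_infsetsum[OF abs]) (use nn in auto)
  also have "infsetsum p UNIV = infsum p UNIV" by (rule infsetsum_infsum[OF abs])
  also have "infsum p UNIV = 1" using hs by (rule infsumI)
  finally show ?thesis by simp
qed

lemma pmf_Pm:
  fixes p :: "'a::countable \<Rightarrow> real"
  assumes "bernoulli_dist p"
  shows "pmf (Pm p) a = p a"
  unfolding Pm_def
  by (rule pmf_embed_pmf) (use assms nn_integral_p[OF assms] in \<open>auto simp: bernoulli_dist_def\<close>)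

lemma pps: "product_prob_space (\<lambda>_::nat. measure_pmf (Pm p))"
  by (rule product_prob_spaceI) (rule prob_space_measure_pmf)

lemma ps_Mp: "prob_space (Mp p)"
  unfolding Mp_def by (rule prob_space_PiM) (rule prob_space_measure_pmf)

lemma space_Mp: "space (Mp p) = UNIV"
  unfolding Mp_def by (simp add: space_PiM)

lemma blk_set_emb:
  "{x. blk w s x} = prod_emb UNIV (\<lambda>_. measure_pmf (Pm p)) {s..<s+length w} (PiE {s..<s+length w} (\<lambda>i. {w ! (i - s)}))"
  unfolding prod_emb_def blk_iff by (auto simp: PiE_iff)

lemma blk_sets: "{x. blk w s x} \<in> sets (Mp p)"
  unfolding blk_set_emb[of w s p] Mp_def by (rule sets_PiM_I) auto

lemma prod_list_nth: "prod_list (map p w) = (\<Prod>t<length w. p (w ! t))"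
  by (induct w rule: rev_induct) (simp_all add: nth_append)

lemma blk_measure:
  fixes p :: "'a::countable \<Rightarrow> real"
  assumes "bernoulli_dist p"
  shows "measure (Mp p) {x. blk w s x} = bernoulli_map p w"
proof -
  interpret product_prob_space "\<lambda>_::nat. measure_pmf (Pm p)" UNIV by (rule pps)
  have "measure (Mp p) {x. blk w s x} = (\<Prod>i\<in>{s..<s+length w}. measure (measure_pmf (Pm p)) {w ! (i - s)})"
    unfolding blk_set_emb[of w s p] Mp_def by (rule measure_PiM_emb) auto
  also have "\<dots> = (\<Prod>i\<in>{s..<s+length w}. p (w ! (i - s)))"
    by (simp add: measure_pmf_single pmf_Pm[OF assms])
  also have "\<dots> = (\<Prod>t\<in>{0..<length w}. p (w ! t))"
    using prod.shift_bounds_nat_ivl[of "\<lambda>i. p (w ! (i - s))" 0 s "length w"] by (simp add: add.commute)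
  also have "\<dots> = bernoulli_map p w"
    unfolding bernoulli_map_def prod_list_nth by (simp add: atLeast0LessThan)
  finally show ?thesis .
qed



lemma indep_coords:
  assumes "finite J" "J \<noteq> {}"
  shows "prob_space.indep_vars (Mp p) (\<lambda>_. measure_pmf (Pm p)) (\<lambda>i x. x i) J"
proof -
  interpret product_prob_space "\<lambda>_::nat. measure_pmf (Pm p)" UNIV by (rule pps)
  interpret M: prob_space "Mp p" by (rule ps_Mp)
  have rv: "\<And>i. i \<in> J \<Longrightarrow> (\<lambda>x. x i) \<in> measurable (Mp p) (measure_pmf (Pm p))"
    unfolding Mp_def by simp
  have "distr (Mp p) (Pi\<^sub>M J (\<lambda>i. measure_pmf (Pm p))) (\<lambda>x. restrict x J) = Pi\<^sub>M J (\<lambda>i. measure_pmf (Pm p))"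
    unfolding Mp_def by (rule distr_PiM_restrict_finite) (use assms in auto)
  moreover have "Pi\<^sub>M J (\<lambda>i. distr (Mp p) (measure_pmf (Pm p)) (\<lambda>x. x i)) = Pi\<^sub>M J (\<lambda>i. measure_pmf (Pm p))"
    unfolding Mp_def by (intro PiM_cong refl PiM_component) simp
  ultimately have "distr (Mp p) (Pi\<^sub>M J (\<lambda>i. measure_pmf (Pm p))) (\<lambda>x. \<lambda>i\<in>J. x i) =
      Pi\<^sub>M J (\<lambda>i. distr (Mp p) (measure_pmf (Pm p)) (\<lambda>x. x i))" by simp
  thus ?thesis using M.indep_vars_iff_distr_eq_PiM'[where I=J and X="\<lambda>i x. x i" and M'="\<lambda>_. measure_pmf (Pm p)", OF assms(2) rv] by blast
qed

definition Yv :: "'a list \<Rightarrow> nat \<Rightarrow> nat \<Rightarrow> (nat \<Rightarrow> 'a) \<Rightarrow> real" where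
  "Yv w r j = (\<lambda>x. indicator (PiE {j*length w+r..<j*length w+r+length w} (\<lambda>i. {w ! (i - (j*length w+r))}))
                   (restrict x {j*length w+r..<j*length w+r+length w}))"

lemma Yv_eq: "Yv w r j x = (if blk w (j*length w+r) x then 1 else 0)"
  unfolding Yv_def blk_iff by (simp add: restrict_PiE_iff indicator_def Pi_iff)

lemma Yv_eq': "Yv w r j = indicator {x. blk w (j*length w+r) x}"
  by (rule ext) (simp add: Yv_eq indicator_def)

lemma indep_Yv:
  assumes k: "length w > 0" and m: "m > 0"
  shows "prob_space.indep_vars (Mp p) (\<lambda>_. borel) (Yv w r) {..<m}"
proof -
  interpret M: prob_space "Mp p" by (rule ps_Mp)
  define k where "k = length w"
  define K where "K = (\<lambda>j. {j*k+r..<j*k+r+k})"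
  have ic: "M.indep_vars (\<lambda>_. measure_pmf (Pm p)) (\<lambda>i x. x i) {..<m*k+r}"
    by (rule indep_coords) (use k m in \<open>auto simp: k_def lessThan_empty_iff\<close>)
  have sub: "K j \<subseteq> {..<m*k+r}" if "j \<in> {..<m}" for j
  proof -
    have "Suc j * k \<le> m * k" using that by (intro mult_right_mono) auto
    thus ?thesis unfolding K_def by auto
  qed
  have disj: "disjoint_family_on K {..<m}"
    unfolding disjoint_family_on_def K_def
  proof (intro ballI impI)
    fix a b :: nat assume "a \<noteq> b"
    then consider "a < b" | "b < a" by linarith
    thus "{a*k+r..<a*k+r+k} \<inter> {b*k+r..<b*k+r+k} = {}"
    proof cases
      case 1 hence "Suc a * k \<le> b * k" by (intro mult_right_mono) auto
      thus ?thesis by auto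
    next
      case 2 hence "Suc b * k \<le> a * k" by (intro mult_right_mono) auto
      thus ?thesis by auto
    qed
  qed
  have ir: "M.indep_vars (\<lambda>j. PiM (K j) (\<lambda>_. measure_pmf (Pm p))) (\<lambda>j \<omega>. restrict (\<lambda>i. \<omega> i) (K j)) {..<m}"
    by (rule M.indep_vars_restrict[OF ic sub disj])
  have "M.indep_vars (\<lambda>_. borel) (\<lambda>j \<omega>. indicator (PiE (K j) (\<lambda>i. {w ! (i - (j*k+r))})) (restrict (\<lambda>i. \<omega> i) (K j)) :: real) {..<m}"
  proof (rule M.indep_vars_compose2[OF ir])
    fix j assume "j \<in> {..<m}"
    have "PiE (K j) (\<lambda>i. {w ! (i - (j*k+r))}) \<in> sets (PiM (K j) (\<lambda>_. measure_pmf (Pm p)))"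
      by (rule sets_PiM_I_finite) (auto simp: K_def)
    thus "(indicator (PiE (K j) (\<lambda>i. {w ! (i - (j*k+r))})) :: _ \<Rightarrow> real) \<in> borel_measurable (PiM (K j) (\<lambda>_. measure_pmf (Pm p)))"
      by (rule borel_measurable_indicator)
  qed
  moreover have "(\<lambda>j \<omega>. indicator (PiE (K j) (\<lambda>i. {w ! (i - (j*k+r))})) (restrict (\<lambda>i. \<omega> i) (K j)) :: real) = Yv w r"
    unfolding Yv_def K_def k_def by (intro ext) simp
  ultimately show ?thesis by simp
qed




lemma Yv_meas: "Yv w r j \<in> borel_measurable (Mp p)"
  unfolding Yv_eq' by (rule borel_measurable_indicator[OF blk_sets])

lemma Yv_sum: "(\<Sum>j<n. Yv w r j x) = real (card {j. j < n \<and> blk w (j*length w+r) x})"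
proof -
  have "(\<Sum>j<n. Yv w r j x) = (\<Sum>j<n. if blk w (j*length w+r) x then 1 else 0)"
    by (simp add: Yv_eq)
  also have "\<dots> = (\<Sum>j\<in>{j\<in>{..<n}. blk w (j*length w+r) x}. 1)"
    by (rule sum.inter_filter[symmetric]) simp
  also have "\<dots> = real (card {j. j < n \<and> blk w (j*length w+r) x})" by simp
  finally show ?thesis .
qed

lemma hoeff:
  fixes p :: "'a::countable \<Rightarrow> real"
  assumes bd: "bernoulli_dist p" and k: "length w > 0" and m: "m > 0" and e: "\<epsilon> \<ge> 0"
  shows "measure (Mp p) {x \<in> space (Mp p). \<bar>(\<Sum>j<m. Yv w r j x) - real m * bernoulli_map p w\<bar> \<ge> real m * \<epsilon>}
           \<le> 2 * exp (-2 * \<epsilon>\<^sup>2) ^ m"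
proof -
  interpret M: prob_space "Mp p" by (rule ps_Mp)
  have ex: "M.expectation (Yv w r j) = bernoulli_map p w" for j
    unfolding Yv_eq' using blk_measure[OF bd] by (simp add: space_Mp)
  interpret H: Hoeffding_ineq "Mp p" "{..<m}" "Yv w r" "\<lambda>_. 0" "\<lambda>_. 1" "real m * bernoulli_map p w"
  proof unfold_locales
    show "finite {..<m}" by simp
    show "M.indep_vars (\<lambda>_. borel) (Yv w r) {..<m}" by (rule indep_Yv[OF k m])
    show "AE x in Mp p. Yv w r i x \<in> {0..1}" for i by (simp add: Yv_eq)
    show "real m * bernoulli_map p w \<equiv> \<Sum>i<m. M.expectation (Yv w r i)" by (simp add: ex)
  qed
  have "M.prob {x \<in> space (Mp p). \<bar>(\<Sum>j<m. Yv w r j x) - real m * bernoulli_map p w\<bar> \<ge> real m * \<epsilon>}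
        \<le> 2 * exp (- 2 * (real m * \<epsilon>)\<^sup>2 / (\<Sum>i<m. (1 - 0)\<^sup>2))"
    by (rule H.Hoeffding_ineq_abs_ge) (use e m in auto)
  also have "- 2 * (real m * \<epsilon>)\<^sup>2 / (\<Sum>i<m. (1 - 0)\<^sup>2) = real m * (-2 * \<epsilon>\<^sup>2)"
    using m by (simp add: power2_eq_square)
  also have "exp (real m * (-2 * \<epsilon>\<^sup>2)) = exp (-2 * \<epsilon>\<^sup>2) ^ m" by (rule exp_of_nat_mult)
  finally show ?thesis .
qed

lemma ae_eventually:
  fixes p :: "'a::countable \<Rightarrow> real"
  assumes bd: "bernoulli_dist p" and k: "length w > 0" and e: "\<epsilon> > 0"
  shows "AE x in Mp p. eventually (\<lambda>n. \<bar>(\<Sum>j<n. Yv w r j x) - real n * bernoulli_map p w\<bar> < real n * \<epsilon>) sequentially"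
proof -
  interpret M: prob_space "Mp p" by (rule ps_Mp)
  define A where "A n = {x \<in> space (Mp p). \<bar>(\<Sum>j<n. Yv w r j x) - real n * bernoulli_map p w\<bar> \<ge> real n * \<epsilon>}" for n
  have [measurable]: "Yv w r j \<in> borel_measurable (Mp p)" for j by (rule Yv_meas)
  have meas: "A n \<in> sets (Mp p)" for n unfolding A_def by measurable
  define q where "q = exp (-2 * \<epsilon>\<^sup>2)"
  have q: "0 \<le> q" "q < 1" unfolding q_def using e by auto
  have bound: "measure (Mp p) (A n) \<le> 2 * q ^ n" for n
  proof (cases "n = 0")
    case True
    have "measure (Mp p) (A n) \<le> 1" by (rule M.prob_le_1)
    moreover have "2 * q ^ n = 2" using True by simp
    ultimately show ?thesis by linarith
  next
    case False
    thus ?thesis unfolding A_def q_def by (intro hoeff[OF bd k]) (use e in auto)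
  qed
  have sm: "summable (\<lambda>n. measure (Mp p) (A n))"
  proof (rule summable_comparison_test')
    show "summable (\<lambda>n. 2 * q ^ n)" using q by (intro summable_mult summable_geometric) auto
    show "norm (measure (Mp p) (A n)) \<le> 2 * q ^ n" for n using bound[of n] by simp
  qed
  have "AE x in Mp p. eventually (\<lambda>n. x \<in> space (Mp p) - A n) sequentially"
    by (rule borel_cantelli_AE1) (use meas sm in \<open>auto simp: M.emeasure_eq_measure\<close>)
  thus ?thesis
  proof (rule AE_mp, intro AE_I2 impI)
    fix x assume x: "x \<in> space (Mp p)" and ev: "eventually (\<lambda>n. x \<in> space (Mp p) - A n) sequentially"
    from ev show "eventually (\<lambda>n. \<bar>(\<Sum>j<n. Yv w r j x) - real n * bernoulli_map p w\<bar> < real n * \<epsilon>) sequentially"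
      by (rule eventually_mono) (use x in \<open>auto simp: A_def\<close>)
  qed
qed

lemma ae_lim:
  fixes p :: "'a::countable \<Rightarrow> real"
  assumes bd: "bernoulli_dist p" and k: "length w > 0"
  shows "AE x in Mp p. (\<lambda>n. real (card {j. j < n \<and> blk w (j*length w+r) x}) / real n) \<longlonglongrightarrow> bernoulli_map p w"
proof -
  have "AE x in Mp p. \<forall>l::nat. eventually (\<lambda>n. \<bar>(\<Sum>j<n. Yv w r j x) - real n * bernoulli_map p w\<bar> < real n * (1 / real (Suc l))) sequentially"
    unfolding AE_all_countable by (intro allI ae_eventually[OF bd k]) simp
  thus ?thesis
  proof (rule AE_mp, intro AE_I2 impI)
    fix x assume all: "\<forall>l::nat. eventually (\<lambda>n. \<bar>(\<Sum>j<n. Yv w r j x) - real n * bernoulli_map p w\<bar> < real n * (1 / real (Suc l))) sequentially"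
    show "(\<lambda>n. real (card {j. j < n \<and> blk w (j*length w+r) x}) / real n) \<longlonglongrightarrow> bernoulli_map p w"
    proof (rule LIMSEQ_I)
      fix \<delta> :: real assume d: "0 < \<delta>"
      obtain l where l: "inverse (real (Suc l)) < \<delta>" using reals_Archimedean[OF d] by blast
      obtain N where N: "\<And>n. n \<ge> N \<Longrightarrow> \<bar>(\<Sum>j<n. Yv w r j x) - real n * bernoulli_map p w\<bar> < real n * (1 / real (Suc l))"
        using all[rule_format, of l] unfolding eventually_sequentially by blast
      show "\<exists>no. \<forall>n\<ge>no. norm (real (card {j. j < n \<and> blk w (j*length w+r) x}) / real n - bernoulli_map p w) < \<delta>"
      proof (intro exI allI impI)
        fix n assume n: "max N 1 \<le> n"
        hence npos: "real n > 0" by simp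
        have "\<bar>real (card {j. j < n \<and> blk w (j*length w+r) x}) - real n * bernoulli_map p w\<bar> < real n * (1 / real (Suc l))"
          using N[of n] n by (simp add: Yv_sum)
        hence "\<bar>real (card {j. j < n \<and> blk w (j*length w+r) x}) - real n * bernoulli_map p w\<bar> / real n < 1 / real (Suc l)"
          using npos by (simp add: field_simps)
        moreover have "\<bar>real (card {j. j < n \<and> blk w (j*length w+r) x}) - real n * bernoulli_map p w\<bar> / real n
             = \<bar>real (card {j. j < n \<and> blk w (j*length w+r) x}) / real n - bernoulli_map p w\<bar>"
          using npos by (simp add: field_simps abs_div[symmetric] del: abs_div)
        ultimately show "norm (real (card {j. j < n \<and> blk w (j*length w+r) x}) / real n - bernoulli_map p w) < \<delta>"
          using l by (simp add: inverse_eq_divide)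
      qed
    qed
  qed
qed

lemma exists_distributed:
  fixes p :: "'a::countable \<Rightarrow> real"
  assumes bd: "bernoulli_dist p"
  shows "\<exists>x. mu_distributed (bernoulli_map p) x"
proof -
  interpret M: prob_space "Mp p" by (rule ps_Mp)
  have "AE x in Mp p. \<forall>wr :: 'a list \<times> nat. (fst wr \<noteq> [] \<and> snd wr < length (fst wr)) \<longrightarrow>
      (\<lambda>n. real (card {j. j < n \<and> blk (fst wr) (j*length (fst wr)+snd wr) x}) / real n) \<longlonglongrightarrow> bernoulli_map p (fst wr)"
    unfolding AE_all_countable by (intro allI AE_impI ae_lim[OF bd]) simp
  then obtain x where x: "\<forall>wr :: 'a list \<times> nat. (fst wr \<noteq> [] \<and> snd wr < length (fst wr)) \<longrightarrow>
      (\<lambda>n. real (card {j. j < n \<and> blk (fst wr) (j*length (fst wr)+snd wr) x}) / real n) \<longlonglongrightarrow> bernoulli_map p (fst wr)"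
    using eventually_happens'[OF M.ae_filter_bot] by blast
  have "mu_distributed (bernoulli_map p) x"
    unfolding mu_distributed_def
  proof (intro allI impI)
    fix w :: "'a list" assume w: "w \<noteq> []"
    define k where "k = length w"
    have k: "k > 0" using w by (simp add: k_def)
    show "(\<lambda>N. real (occ w x N) / real N) \<longlonglongrightarrow> bernoulli_map p w"
    proof (rule occ_limit_abstract[OF k])
      show "occ w x N = (\<Sum>r<k. card {j. j < (N - r) div k \<and> map x [j*k+r..<j*k+r+k] = w})" for N
        by (rule occ_decomp) (use k in \<open>auto simp: k_def\<close>)
      show "card {j. j < 0 \<and> map x [j*k+r..<j*k+r+k] = w} = 0" for r by simp
      fix r assume r: "r < k"
      show "(\<lambda>m. real (card {j. j < m \<and> map x [j*k+r..<j*k+r+k] = w}) / real m) \<longlonglongrightarrow> bernoulli_map p w"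
        using x[rule_format, of "(w, r)"] w r unfolding blk_def k_def by (simp add: add.assoc)
    qed
  qed
  thus ?thesis by blast
qed



lemma occ_diff_bound:
  "occ w \<alpha> N \<le> occ w \<beta> N + length w * card ({i. \<alpha> i \<noteq> \<beta> i} \<inter> {..<N})"
proof -
  let ?k = "length w"
  define A where "A = (\<lambda>\<gamma>::nat\<Rightarrow>'a. {i. i + ?k \<le> N \<and> map \<gamma> [i..<i + ?k] = w})"
  define D where "D = {i. \<alpha> i \<noteq> \<beta> i} \<inter> {..<N}"
  have finA: "finite (A \<gamma>)" for \<gamma> unfolding A_def by (rule finite_subset[of _ "{..N}"]) auto
  have sub: "A \<alpha> - A \<beta> \<subseteq> (\<lambda>(d,t). d - t) ` (D \<times> {..<?k})"
  proof
    fix i assume i: "i \<in> A \<alpha> - A \<beta>"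
    have "\<exists>t<?k. \<alpha> (i+t) \<noteq> \<beta> (i+t)"
    proof (rule ccontr)
      assume "\<not> ?thesis"
      hence "map \<alpha> [i..<i + ?k] = map \<beta> [i..<i + ?k]"
        by (intro map_cong) (auto, metis add_diff_inverse_nat add_less_cancel_left not_le)
      thus False using i unfolding A_def by (metis (mono_tags, lifting) Diff_iff mem_Collect_eq)
    qed
    then obtain t where t: "t < ?k" "\<alpha> (i+t) \<noteq> \<beta> (i+t)" by blast
    have "i + t \<in> D" using t i unfolding D_def A_def by auto
    thus "i \<in> (\<lambda>(d,t). d - t) ` (D \<times> {..<?k})" using t by (auto intro!: image_eqI[of _ _ "(i+t, t)"])
  qed
  have "card (A \<alpha>) \<le> card (A \<beta> \<union> (A \<alpha> - A \<beta>))" by (rule card_mono) (auto simp: finA)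
  also have "\<dots> \<le> card (A \<beta>) + card (A \<alpha> - A \<beta>)" by (rule card_Un_le)
  also have "card (A \<alpha> - A \<beta>) \<le> card ((\<lambda>(d,t). d - t) ` (D \<times> {..<?k}))"
    by (rule card_mono[OF _ sub]) (auto simp: D_def)
  also have "\<dots> \<le> card (D \<times> {..<?k})" by (rule card_image_le) (auto simp: D_def)
  also have "\<dots> = card D * ?k" by (simp add: card_cartesian_product)
  finally show ?thesis unfolding occ_def A_def D_def by (simp add: mult.commute)
qed

lemma modify_distributed:
  assumes md: "mu_distributed mu \<beta>"
    and dens: "(\<lambda>N. real (card ({i. \<alpha> i \<noteq> \<beta> i} \<inter> {..<N})) / real N) \<longlonglongrightarrow> 0"
  shows "mu_distributed mu \<alpha>"
  unfolding mu_distributed_def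
proof (intro allI impI)
  fix w :: "'a list" assume w: "w \<noteq> []"
  define c where "c = (\<lambda>N. real (card ({i. \<alpha> i \<noteq> \<beta> i} \<inter> {..<N})))"
  have c2: "c = (\<lambda>N. real (card ({i. \<beta> i \<noteq> \<alpha> i} \<inter> {..<N})))"
    unfolding c_def by (intro ext arg_cong[where f="\<lambda>S. real (card (S \<inter> _))"]) auto
  have b1: "real (occ w \<alpha> N) \<le> real (occ w \<beta> N) + real (length w) * c N" for N
    using occ_diff_bound[of w \<alpha> N \<beta>] unfolding c_def by (metis of_nat_add of_nat_le_iff of_nat_mult)
  have b2: "real (occ w \<beta> N) \<le> real (occ w \<alpha> N) + real (length w) * c N" for N
    using occ_diff_bound[of w \<beta> N \<alpha>] unfolding c2 by (metis of_nat_add of_nat_le_iff of_nat_mult)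
  have "(\<lambda>N. real (occ w \<beta> N) / real N + (real (occ w \<alpha> N) / real N - real (occ w \<beta> N) / real N)) \<longlonglongrightarrow> mu w + 0"
  proof (intro tendsto_add)
    show "(\<lambda>N. real (occ w \<beta> N) / real N) \<longlonglongrightarrow> mu w" using md w unfolding mu_distributed_def by auto
    show "(\<lambda>N. real (occ w \<alpha> N) / real N - real (occ w \<beta> N) / real N) \<longlonglongrightarrow> 0"
    proof (rule Lim_null_comparison)
      show "\<forall>\<^sub>F N in sequentially. norm (real (occ w \<alpha> N) / real N - real (occ w \<beta> N) / real N) \<le> real (length w) * (c N / real N)"
      proof (intro always_eventually allI)
        fix N
        have "\<bar>real (occ w \<alpha> N) - real (occ w \<beta> N)\<bar> \<le> real (length w) * c N" using b1[of N] b2[of N] by linarith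
        hence "\<bar>real (occ w \<alpha> N) - real (occ w \<beta> N)\<bar> / real N \<le> real (length w) * c N / real N"
          by (rule divide_right_mono) simp
        thus "norm (real (occ w \<alpha> N) / real N - real (occ w \<beta> N) / real N) \<le> real (length w) * (c N / real N)"
          by (simp add: diff_divide_distrib[symmetric])
      qed
      show "(\<lambda>N. real (length w) * (c N / real N)) \<longlonglongrightarrow> 0"
        using tendsto_mult[OF tendsto_const[of "real (length w)"] dens] unfolding c_def by simp
    qed
  qed
  thus "(\<lambda>N. real (occ w \<alpha> N) / real N) \<longlonglongrightarrow> mu w" by simp
qed



definition Zset :: "nat set" where "Zset = range (\<lambda>n. 4^Suc n) \<union> range (\<lambda>n. 4^Suc n + 1)"

definition fsel :: "nat \<Rightarrow> nat" where "fsel j = 4^(j div 2 + 1) + 1 + j mod 2"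

lemma four_pow_mod: "(4::nat)^Suc n mod 4 = 0" by simp

lemma Zset_iff: "x \<in> Zset \<longleftrightarrow> (\<exists>n. x = 4^Suc n \<or> x = 4^Suc n + 1)"
  unfolding Zset_def by auto

lemma fsel_Zset: "fsel j - 1 \<in> Zset" "fsel j \<noteq> 0"
proof -
  have "fsel j - 1 = 4^Suc (j div 2) \<or> fsel j - 1 = 4^Suc (j div 2) + 1"
    unfolding fsel_def by (cases "even j") (simp_all add: odd_iff_mod_2_eq_one)
  thus "fsel j - 1 \<in> Zset" unfolding Zset_iff by blast
  show "fsel j \<noteq> 0" unfolding fsel_def by simp
qed

lemma sel_set: "{i. i \<noteq> 0 \<and> i - 1 \<in> Zset} = range fsel"
proof (intro equalityI subsetI)
  fix i assume "i \<in> {i. i \<noteq> 0 \<and> i - 1 \<in> Zset}"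
  then obtain n where n: "i \<noteq> 0" "i - 1 = 4^Suc n \<or> i - 1 = 4^Suc n + 1" unfolding Zset_iff by auto
  show "i \<in> range fsel"
  proof (cases "i - 1 = 4^Suc n")
    case True
    hence "fsel (2*n) = i" using n unfolding fsel_def by simp
    thus ?thesis by (metis rangeI)
  next
    case False
    hence "fsel (2*n+1) = i" using n unfolding fsel_def by simp
    thus ?thesis by (metis rangeI)
  qed
next
  fix i assume "i \<in> range fsel" thus "i \<in> {i. i \<noteq> 0 \<and> i - 1 \<in> Zset}" using fsel_Zset by auto
qed

lemma strict_mono_fsel: "strict_mono fsel"
proof (rule strict_monoI_Suc)
  fix j
  show "fsel j < fsel (Suc j)"
  proof (cases "even j")
    case True
    have "Suc j div 2 = j div 2" "Suc j mod 2 = 1" "j mod 2 = 0" using True by presburger+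
    then show ?thesis unfolding fsel_def by simp
  next
    case False
    then obtain m where m: "j = 2*m+1" by (metis oddE)
    have e: "j div 2 = m" "j mod 2 = 1" "Suc j div 2 = m + 1" "Suc j mod 2 = 0" using m by presburger+
    have pos: "(0::nat) < 4^m" by simp
    have "(4::nat)^(m+1) + 2 < 4^(m+1+1)" using pos by (simp; linarith)
    then show ?thesis unfolding fsel_def e by simp
  qed
qed

lemma enumerate_strict_mono_range:
  fixes f :: "nat \<Rightarrow> nat"
  assumes "strict_mono f"
  shows "enumerate (range f) n = f n"
proof (induct n)
  case 0
  show ?case unfolding enumerate_0
    by (rule Least_equality) (auto simp: assms strict_mono_less_eq)
next
  have inf: "infinite (range f)" using assms by (metis finite_imageD infinite_UNIV_nat strict_mono_imp_inj_on)
  case (Suc n)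
  show ?case unfolding enumerate_Suc''[OF inf] Suc
    by (rule Least_equality) (auto simp: assms strict_mono_less strict_mono_less_eq Suc_le_eq)
qed

lemma postnikova_single: "xs \<in> postnikova [b] \<longleftrightarrow> xs \<noteq> [] \<and> last xs = b"
  unfolding postnikova_def by (auto, metis append_butlast_last_id)

lemma pow4_sq: "(Suc n)^2 < (4::nat)^Suc n"
proof -
  have h: "Suc n < 2^Suc n" by (rule less_exp)
  have "(Suc n)^2 < (2^Suc n)^2" by (rule power_strict_mono[OF h]) simp_all
  also have "((2::nat)^Suc n)^2 = 2^Suc n * 2^Suc n" by (rule power2_eq_square)
  also have "(2::nat)^Suc n * 2^Suc n = (2*2)^Suc n" by (rule power_mult_distrib[symmetric])
  finally show ?thesis by simp
qed

lemma ceil_bound: "(Suc n)^2 < N \<Longrightarrow> n < nat \<lceil>sqrt (real N)\<rceil>"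
proof -
  assume a: "(Suc n)^2 < N"
  have "real ((Suc n)^2) < real N" using a by (simp only: of_nat_less_iff)
  hence "real (Suc n)^2 < real N" by (simp only: of_nat_power)
  hence b: "real (Suc n) < sqrt (real N)" by (rule real_less_rsqrt)
  have "int (Suc n) \<le> \<lceil>sqrt (real N)\<rceil>" using b by (simp add: le_ceiling_iff)
  hence "Suc n \<le> nat \<lceil>sqrt (real N)\<rceil>" by (simp add: le_nat_iff)
  thus ?thesis by simp
qed

lemma card_Zset_le: "card (Zset \<inter> {..<N}) \<le> 2 * nat \<lceil>sqrt (real N)\<rceil>"
proof -
  define T where "T = nat \<lceil>sqrt (real N)\<rceil>"
  have sub: "Zset \<inter> {..<N} \<subseteq> (\<lambda>n. 4^Suc n) ` {..<T} \<union> (\<lambda>n. 4^Suc n + 1) ` {..<T}"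
  proof
    fix x assume x: "x \<in> Zset \<inter> {..<N}"
    hence "x \<in> Zset" by simp
    then obtain n where n: "x = 4^Suc n \<or> x = 4^Suc n + 1" unfolding Zset_def by blast
    have "x < N" using x by simp
    moreover have "4^Suc n \<le> x" using n by auto
    ultimately have "(Suc n)^2 < N" using pow4_sq[of n] by linarith
    hence "n < T" unfolding T_def by (rule ceil_bound)
    thus "x \<in> (\<lambda>n. 4^Suc n) ` {..<T} \<union> (\<lambda>n. 4^Suc n + 1) ` {..<T}" using n by auto
  qed
  have "card (Zset \<inter> {..<N}) \<le> card ((\<lambda>n. (4::nat)^Suc n) ` {..<T} \<union> (\<lambda>n. (4::nat)^Suc n + 1) ` {..<T})"
    by (rule card_mono[OF _ sub]) simp
  also have "\<dots> \<le> card ((\<lambda>n. (4::nat)^Suc n) ` {..<T}) + card ((\<lambda>n. (4::nat)^Suc n + 1) ` {..<T})"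
    by (rule card_Un_le)
  also have "\<dots> \<le> T + T"
  proof (rule add_mono)
    show "card ((\<lambda>n. (4::nat)^Suc n) ` {..<T}) \<le> T" using card_image_le[of "{..<T}" "\<lambda>n. (4::nat)^Suc n"] by simp
    show "card ((\<lambda>n. (4::nat)^Suc n + 1) ` {..<T}) \<le> T" using card_image_le[of "{..<T}" "\<lambda>n. (4::nat)^Suc n + 1"] by simp
  qed
  finally show ?thesis unfolding T_def by simp
qed

lemma Zset_density: "(\<lambda>N. real (card (Zset \<inter> {..<N})) / real N) \<longlonglongrightarrow> 0"
proof (rule Lim_null_comparison)
  show "\<forall>\<^sub>F N in sequentially. norm (real (card (Zset \<inter> {..<N})) / real N) \<le> (2 * sqrt (real N) + 2) / real N"
  proof (intro always_eventually allI)
    fix N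
    have "real (card (Zset \<inter> {..<N})) \<le> 2 * real (nat \<lceil>sqrt (real N)\<rceil>)"
      using card_Zset_le[of N] by (metis of_nat_le_iff of_nat_mult of_nat_numeral)
    also have "\<dots> \<le> 2 * sqrt (real N) + 2"
      using of_int_ceiling_le_add_one[of "sqrt (real N)"] by simp linarith
    finally show "norm (real (card (Zset \<inter> {..<N})) / real N) \<le> (2 * sqrt (real N) + 2) / real N"
      by (simp add: divide_right_mono)
  qed
  show "(\<lambda>N. (2 * sqrt (real N) + 2) / real N) \<longlonglongrightarrow> 0" by real_asymp
qed



lemma occ_single: "occ [b] \<beta> N = card ({i. \<beta> i = b} \<inter> {..<N})"
proof -
  have "{i. i + length [b] \<le> N \<and> map \<beta> [i..<i + length [b]] = [b]} = {i. \<beta> i = b} \<inter> {..<N}"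
    by auto
  thus ?thesis unfolding occ_def by simp
qed

lemma construct_B:
  assumes md: "mu_distributed mu \<beta>" and mub: "mu [b] = 0" and cb: "c \<noteq> b"
  shows "\<exists>\<alpha>. mu_distributed mu \<alpha> \<and> infinite (sel_positions (postnikova [b]) \<alpha>)
             \<and> \<not> mu_distributed mu (select (postnikova [b]) \<alpha>)"
proof -
  define \<alpha> where "\<alpha> i = (if i \<in> Zset then b else if \<beta> i = b then c else \<beta> i)" for i
  have \<alpha>b: "\<alpha> i = b \<longleftrightarrow> i \<in> Zset" for i using cb by (auto simp: \<alpha>_def)
  have last_eq: "last (map \<alpha> [0..<i]) = \<alpha> (i - 1)" if "i \<noteq> 0" for i
    using that by (simp add: last_map)
  have sel: "sel_positions (postnikova [b]) \<alpha> = range fsel"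
  proof -
    have "sel_positions (postnikova [b]) \<alpha> = {i. i \<noteq> 0 \<and> i - 1 \<in> Zset}"
      unfolding sel_positions_def postnikova_single
    proof (intro Collect_cong)
      fix i
      show "(map \<alpha> [0..<i] \<noteq> [] \<and> last (map \<alpha> [0..<i]) = b) = (i \<noteq> 0 \<and> i - 1 \<in> Zset)"
      proof (cases "i = 0")
        case False
        then show ?thesis using last_eq[OF False] \<alpha>b[of "i - 1"] by simp
      qed simp
    qed
    thus ?thesis using sel_set by simp
  qed
  have inf: "infinite (range fsel)"
    using strict_mono_fsel by (metis range_inj_infinite strict_mono_imp_inj_on)
  have gam: "select (postnikova [b]) \<alpha> = \<alpha> \<circ> fsel"
    unfolding select_def sel by (rule ext) (simp add: enumerate_strict_mono_range[OF strict_mono_fsel])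
  have gb: "(\<alpha> \<circ> fsel) (2*m) = b" for m
  proof -
    have "fsel (2*m) = 4^Suc m + 1" unfolding fsel_def by simp
    thus ?thesis using \<alpha>b unfolding Zset_def by auto
  qed
  have notmd: "\<not> mu_distributed mu (\<alpha> \<circ> fsel)"
  proof
    assume "mu_distributed mu (\<alpha> \<circ> fsel)"
    hence lim: "(\<lambda>N. real (occ [b] (\<alpha> \<circ> fsel) N) / real N) \<longlonglongrightarrow> 0"
      unfolding mu_distributed_def using mub by (metis list.distinct(1))
    have lb: "N div 2 \<le> occ [b] (\<alpha> \<circ> fsel) N" for N
    proof -
      have "(\<lambda>m. 2*m) ` {..<N div 2} \<subseteq> {i. (\<alpha> \<circ> fsel) i = b} \<inter> {..<N}"
        using gb by auto
      hence "card ((\<lambda>m. 2*m) ` {..<N div 2}) \<le> card ({i. (\<alpha> \<circ> fsel) i = b} \<inter> {..<N})"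
        by (rule card_mono[rotated]) simp
      moreover have "card ((\<lambda>m. 2*m) ` {..<N div 2}) = N div 2"
        by (subst card_image) (auto simp: inj_on_def)
      ultimately show ?thesis by (simp add: occ_single)
    qed
    have "eventually (\<lambda>N. 1/3 \<le> real (occ [b] (\<alpha> \<circ> fsel) N) / real N) sequentially"
      using eventually_ge_at_top[of "3::nat"]
    proof eventually_elim
      case (elim N)
      have "real N - 1 \<le> 2 * real (N div 2)"
      proof -
        have "N \<le> 2 * (N div 2) + 1" by linarith
        hence "real N \<le> real (2 * (N div 2) + 1)" by (simp only: of_nat_le_iff)
        thus ?thesis by simp
      qed
      moreover have "real (N div 2) \<le> real (occ [b] (\<alpha> \<circ> fsel) N)" using lb[of N] by simp
      moreover have "real N \<ge> 3" using elim by simp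
      ultimately have "real N / 3 \<le> real (occ [b] (\<alpha> \<circ> fsel) N)" by linarith
      thus ?case using elim by (simp add: field_simps)
    qed
    from tendsto_lowerbound[OF lim this] show False by simp
  qed
  have dens: "(\<lambda>N. real (card ({i. \<alpha> i \<noteq> \<beta> i} \<inter> {..<N})) / real N) \<longlonglongrightarrow> 0"
  proof (rule Lim_null_comparison)
    have bl: "(\<lambda>N. real (occ [b] \<beta> N) / real N) \<longlonglongrightarrow> 0"
      using md mub unfolding mu_distributed_def by (metis list.distinct(1))
    show "(\<lambda>N. real (card (Zset \<inter> {..<N})) / real N + real (occ [b] \<beta> N) / real N) \<longlonglongrightarrow> 0"
      using tendsto_add[OF Zset_density bl] by simp
    show "\<forall>\<^sub>F N in sequentially. norm (real (card ({i. \<alpha> i \<noteq> \<beta> i} \<inter> {..<N})) / real N)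
            \<le> real (card (Zset \<inter> {..<N})) / real N + real (occ [b] \<beta> N) / real N"
    proof (intro always_eventually allI)
      fix N
      have "{i. \<alpha> i \<noteq> \<beta> i} \<inter> {..<N} \<subseteq> (Zset \<inter> {..<N}) \<union> ({i. \<beta> i = b} \<inter> {..<N})"
        by (auto simp: \<alpha>_def split: if_splits)
      hence "card ({i. \<alpha> i \<noteq> \<beta> i} \<inter> {..<N}) \<le> card ((Zset \<inter> {..<N}) \<union> ({i. \<beta> i = b} \<inter> {..<N}))"
        by (rule card_mono[rotated]) simp
      also have "\<dots> \<le> card (Zset \<inter> {..<N}) + card ({i. \<beta> i = b} \<inter> {..<N})" by (rule card_Un_le)
      finally have "real (card ({i. \<alpha> i \<noteq> \<beta> i} \<inter> {..<N})) \<le> real (card (Zset \<inter> {..<N})) + real (occ [b] \<beta> N)"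
        unfolding occ_single by (metis of_nat_add of_nat_le_iff)
      hence "real (card ({i. \<alpha> i \<noteq> \<beta> i} \<inter> {..<N})) / real N \<le> (real (card (Zset \<inter> {..<N})) + real (occ [b] \<beta> N)) / real N"
        by (rule divide_right_mono) simp
      thus "norm (real (card ({i. \<alpha> i \<noteq> \<beta> i} \<inter> {..<N})) / real N)
            \<le> real (card (Zset \<inter> {..<N})) / real N + real (occ [b] \<beta> N) / real N"
        by (simp add: add_divide_distrib)
    qed
  qed
  show ?thesis
    using modify_distributed[OF md dens] sel inf gam notmd by auto
qed


theorem lemma4p2:
  fixes p :: "'a::countable \<Rightarrow> real"
  assumes "bernoulli_dist p"
    and "\<exists>b. p b = 0"
  shows "\<exists>(w::'a list) (alpha::nat \<Rightarrow> 'a).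
           mu_distributed (bernoulli_map p) alpha
         \<and> infinite (sel_positions (postnikova w) alpha)
         \<and> \<not> mu_distributed (bernoulli_map p) (select (postnikova w) alpha)"
proof -
  obtain b where pb: "p b = 0" using assms(2) by blast
  have "\<exists>c. c \<noteq> b"
  proof (rule ccontr)
    assume "\<not> (\<exists>c. c \<noteq> b)"
    hence "p = (\<lambda>_. 0)" using pb by (intro ext) auto
    hence "((\<lambda>_::'a. 0::real) has_sum 1) UNIV" using assms(1) unfolding bernoulli_dist_def by simp
    moreover have "((\<lambda>_::'a. 0::real) has_sum 0) UNIV" by (rule has_sum_0) simp
    ultimately show False using has_sum_unique by fastforce
  qed
  then obtain c where cb: "c \<noteq> b" by blast
  obtain \<beta> where md: "mu_distributed (bernoulli_map p) \<beta>" using exists_distributed[OF assms(1)] by blast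
  have mub: "bernoulli_map p [b] = 0" using pb by (simp add: bernoulli_map_def)
  show ?thesis using construct_B[OF md mub cb] by blast
qed

end
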